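(* Let $G=(V,E)$ be a Blowfish policy graph that is a tree with $V=\mathcal{T}\cup\{\bot\}$, $|\mathcal{T}|=k$, and let $\mathbf{P}_G$ be the matrix constructed from $G$ as described in the context (it is then a square invertible $k\times k$ matrix with inverse $\mathbf{P}_G^{-1}$). Then any pair of databases $\mathbf{y},\mathbf{z}\in\mathbb{R}^k$ are neighbors according to the Blowfish policy $G$ if and only if $\mathbf{P}_G^{-1}\mathbf{y}$ and $\mathbf{P}_G^{-1}\mathbf{z}$ are neighboring databases according to unbounded differential privacy, i.e. $\mathbf{P}_G^{-1}\mathbf{y}-\mathbf{P}_G^{-1}\mathbf{z}=\pm\mathbf{e}_i$ for some standard unit vector $\mathbf{e}_i$.
   Context: Construction of $\mathbf{P}_G$: rows indexed by $\mathcal{T}$, columns indexed by $E$; for an edge $(u,v)$ with $u,v\ne\bot$ the column has a $1$ in row $u$, a $-1$ in row $v$ and zeros elsewhere; for an edge $(u,\bot)$ the column has a $1$ in row $u$ and zeros elsewhere. Databases are histogram vectors in $\mathbb{R}^k$ indexed by $\mathcal{T}$. $\mathbf{y},\mathbf{z}$ are Blowfish neighbors under $G$ iff $\mathbf{y}-\mathbf{z}=\pm(\mathbf{e}_u-\mathbf{e}_v)$ for some edge $(u,v)\in E$ with $u,v\neq\bot$, or $\mathbf{y}-\mathbf{z}=\pm\mathbf{e}_u$ for some edge $(u,\bot)\in E$. *)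

theory Defs
  imports "HOL-Analysis.Analysis"
begin

(* Policy graph G = (V,E) with V = T \<union> {\<bottom>}: T is the finite type 'a, the vertex
   set is 'a option with None playing the role of \<bottom>.  Edges form the finite
   type 'e; edge e is the ordered pair (Some (src e), tgt e), i.e. (u,v) with
   u \<noteq> \<bottom>, and v = \<bottom> iff tgt e = None (edges to \<bottom> are written (u,\<bottom>) as in the
   paper). *)

definition edge_adj_without ::
  "('e \<Rightarrow> 'a) \<Rightarrow> ('e \<Rightarrow> 'a option) \<Rightarrow> 'e set \<Rightarrow> ('a option \<times> 'a option) set" where
  "edge_adj_without src tgt X =
     {(x, y). \<exists>e. e \<notin> X \<and> ((x = Some (src e) \<and> y = tgt e) \<or> (y = Some (src e) \<and> x = tgt e))}"

definition graph_connected :: "('e \<Rightarrow> 'a) \<Rightarrow> ('e \<Rightarrow> 'a option) \<Rightarrow> bool" where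
  "graph_connected src tgt \<longleftrightarrow> (\<forall>x y. (x, y) \<in> (edge_adj_without src tgt {})\<^sup>*)"

(* acyclic: no edge lies on a cycle, i.e. deleting any edge separates its endpoints
   (this also excludes loops and parallel edges) *)
definition graph_acyclic :: "('e \<Rightarrow> 'a) \<Rightarrow> ('e \<Rightarrow> 'a option) \<Rightarrow> bool" where
  "graph_acyclic src tgt \<longleftrightarrow>
     (\<forall>e. (Some (src e), tgt e) \<notin> (edge_adj_without src tgt {e})\<^sup>*)"

definition is_tree :: "('e \<Rightarrow> 'a) \<Rightarrow> ('e \<Rightarrow> 'a option) \<Rightarrow> bool" where
  "is_tree src tgt \<longleftrightarrow> graph_connected src tgt \<and> graph_acyclic src tgt"

definition PG :: "('e::finite \<Rightarrow> 'a::finite) \<Rightarrow> ('e \<Rightarrow> 'a option) \<Rightarrow> real ^ 'e ^ 'a" where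
  "PG src tgt = (\<chi> t e. (if src e = t then 1 else 0) - (if tgt e = Some t then 1 else 0))"

definition blowfish_neighbors ::
  "('e \<Rightarrow> 'a::finite) \<Rightarrow> ('e \<Rightarrow> 'a option) \<Rightarrow> real ^ 'a \<Rightarrow> real ^ 'a \<Rightarrow> bool" where
  "blowfish_neighbors src tgt y z \<longleftrightarrow>
     (\<exists>e. (\<exists>v. tgt e = Some v \<and>
              (y - z = axis (src e) 1 - axis v 1 \<or> y - z = -(axis (src e) 1 - axis v 1)))
        \<or> (tgt e = None \<and> (y - z = axis (src e) 1 \<or> y - z = - axis (src e) 1)))"

definition unbounded_dp_neighbors :: "real ^ 'n::finite \<Rightarrow> real ^ 'n \<Rightarrow> bool" where
  "unbounded_dp_neighbors x w \<longleftrightarrow> (\<exists>i. x - w = axis i 1 \<or> x - w = - axis i 1)"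

end

theory Submission
  imports Defs
begin

definition vv :: "'a option \<Rightarrow> real ^ 'a::finite" where
  "vv x = (case x of None \<Rightarrow> 0 | Some t \<Rightarrow> axis t 1)"

lemma PG_col:
  fixes src :: "'e::finite \<Rightarrow> 'a::finite"
  shows "PG src tgt *v axis e 1 = vv (Some (src e)) - vv (tgt e)"
  unfolding matrix_vector_mult_basis
  by (auto simp: vec_eq_iff column_def PG_def vv_def axis_def split: option.splits)

lemma adj_sym: "(x, y) \<in> edge_adj_without src tgt X \<Longrightarrow> (y, x) \<in> edge_adj_without src tgt X"
  unfolding edge_adj_without_def by blast

lemma reach_range:
  fixes src :: "'e::finite \<Rightarrow> 'a::finite"
  assumes "(x, y) \<in> (edge_adj_without src tgt {})\<^sup>*"
  shows "\<exists>w. PG src tgt *v w = vv x - vv y"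
  using assms
proof (induction rule: rtrancl_induct)
  case base
  then show ?case by (intro exI[of _ 0]) simp
next
  case (step y z)
  from step.IH obtain w where w: "PG src tgt *v w = vv x - vv y" by blast
  from step.hyps(2) obtain e where
    e: "(y = Some (src e) \<and> z = tgt e) \<or> (z = Some (src e) \<and> y = tgt e)"
    unfolding edge_adj_without_def by blast
  then show ?case
  proof
    assume h: "y = Some (src e) \<and> z = tgt e"
    show ?case
      by (rule exI[of _ "w + axis e 1"])
        (simp add: matrix_vector_right_distrib w PG_col h)
  next
    assume h: "z = Some (src e) \<and> y = tgt e"
    show ?case
      by (rule exI[of _ "w - axis e 1"])
        (simp add: matrix_vector_mult_diff_distrib w PG_col h)
  qed
qed

lemma surj_PG:
  fixes src :: "'e::finite \<Rightarrow> 'a::finite"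
  assumes "graph_connected src tgt"
  shows "surj ((*v) (PG src tgt))"
proof -
  have "\<forall>t. \<exists>w. PG src tgt *v w = axis t 1"
  proof
    fix t :: 'a
    from assms have "(Some t, None) \<in> (edge_adj_without src tgt {})\<^sup>*"
      unfolding graph_connected_def by blast
    from reach_range[OF this] show "\<exists>w. PG src tgt *v w = axis t 1"
      by (simp add: vv_def)
  qed
  then obtain w where w: "\<And>t. PG src tgt *v w t = axis t 1" by metis
  show ?thesis
  proof (rule surjI)
    fix y :: "real ^ 'a"
    have "PG src tgt *v (\<Sum>t\<in>UNIV. y$t *s w t) = (\<Sum>t\<in>UNIV. y$t *s (PG src tgt *v w t))"
      by (simp add: vec.linear_sum[OF matrix_vector_mul_linear_gen]
          vec.linear_scale[OF matrix_vector_mul_linear_gen])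
    also have "\<dots> = y" by (simp add: w basis_expansion)
    finally show "PG src tgt *v (\<Sum>t\<in>UNIV. y$t *s w t) = y" .
  qed
qed

lemma colsum:
  fixes src :: "'e::finite \<Rightarrow> 'a::finite"
  assumes "None \<notin> S"
  shows "(\<Sum>t\<in>{t. Some t \<in> S}. PG src tgt $ t $ f) =
     (if Some (src f) \<in> S then 1 else 0) - (if tgt f \<in> S then 1 else 0)"
proof -
  have "(\<Sum>t\<in>{t. Some t \<in> S}. PG src tgt $ t $ f) =
     (\<Sum>t\<in>{t. Some t \<in> S}. (if src f = t then 1 else 0)) -
     (\<Sum>t\<in>{t. Some t \<in> S}. (if tgt f = Some t then 1 else 0))"
    by (simp add: PG_def sum_subtractf)
  also have "(\<Sum>t\<in>{t. Some t \<in> S}. (if src f = t then 1 else 0)) =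
      (if Some (src f) \<in> S then 1 else (0::real))"
    by (simp add: sum.delta)
  also have "(\<Sum>t\<in>{t. Some t \<in> S}. (if tgt f = Some t then 1 else 0)) =
      (if tgt f \<in> S then 1 else (0::real))"
  proof (cases "tgt f")
    case None
    then show ?thesis using assms by simp
  next
    case (Some v)
    then show ?thesis by (simp add: sum.delta)
  qed
  finally show ?thesis .
qed

lemma cut_sum:
  fixes src :: "'e::finite \<Rightarrow> 'a::finite"
  assumes N: "None \<notin> S"
    and cl: "\<And>a b. a \<in> S \<Longrightarrow> (a, b) \<in> edge_adj_without src tgt {e} \<Longrightarrow> b \<in> S"
  shows "(\<Sum>t\<in>{t. Some t \<in> S}. (PG src tgt *v x) $ t) =
     x $ e * ((if Some (src e) \<in> S then 1 else 0) - (if tgt e \<in> S then 1 else 0))"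
proof -
  define g where "g f = (if Some (src f) \<in> S then 1 else 0) - (if tgt f \<in> S then 1 else (0::real))" for f
  have g0: "g f = 0" if "f \<noteq> e" for f
  proof -
    have a1: "(Some (src f), tgt f) \<in> edge_adj_without src tgt {e}"
      using that unfolding edge_adj_without_def by blast
    have a2: "(tgt f, Some (src f)) \<in> edge_adj_without src tgt {e}"
      using that unfolding edge_adj_without_def by blast
    have "Some (src f) \<in> S \<longleftrightarrow> tgt f \<in> S" using cl[OF _ a1] cl[OF _ a2] by blast
    then show ?thesis by (simp add: g_def)
  qed
  have "(\<Sum>t\<in>{t. Some t \<in> S}. (PG src tgt *v x) $ t) =
      (\<Sum>t\<in>{t. Some t \<in> S}. \<Sum>f\<in>UNIV. PG src tgt $ t $ f * x $ f)"
    by (simp add: matrix_vector_mult_def)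
  also have "\<dots> = (\<Sum>f\<in>UNIV. \<Sum>t\<in>{t. Some t \<in> S}. PG src tgt $ t $ f * x $ f)"
    by (rule sum.swap)
  also have "\<dots> = (\<Sum>f\<in>UNIV. x $ f * g f)"
  proof (rule sum.cong)
    fix f :: 'e
    have "(\<Sum>t\<in>{t. Some t \<in> S}. PG src tgt $ t $ f * x $ f) =
        x $ f * (\<Sum>t\<in>{t. Some t \<in> S}. PG src tgt $ t $ f)"
      by (simp add: sum_distrib_left mult.commute)
    then show "(\<Sum>t\<in>{t. Some t \<in> S}. PG src tgt $ t $ f * x $ f) = x $ f * g f"
      by (simp add: colsum[OF N] g_def)
  qed simp
  also have "\<dots> = (\<Sum>f\<in>UNIV. if f = e then x $ e * g e else 0)"
    by (rule sum.cong) (auto simp: g0)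
  also have "\<dots> = x $ e * g e" by simp
  finally show ?thesis by (simp add: g_def)
qed

lemma inj_PG:
  fixes src :: "'e::finite \<Rightarrow> 'a::finite"
  assumes "graph_acyclic src tgt"
  shows "inj ((*v) (PG src tgt))"
proof -
  have "x = 0" if x: "PG src tgt *v x = 0" for x
  proof (rule ccontr)
    assume "x \<noteq> 0"
    then obtain e where xe: "x $ e \<noteq> 0" by (auto simp: vec_eq_iff)
    let ?A = "edge_adj_without src tgt {e}"
    have ac: "(Some (src e), tgt e) \<notin> ?A\<^sup>*"
      using assms unfolding graph_acyclic_def by blast
    have symA: "(b, a) \<in> ?A\<^sup>*" if "(a, b) \<in> ?A\<^sup>*" for a b
      using that
    proof (induction rule: rtrancl_induct)
      case base then show ?case by simp
    next
      case (step y z)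
      then show ?case using adj_sym[OF step.hyps(2)]
        by (meson converse_rtrancl_into_rtrancl)
    qed
    define C where "C = ?A\<^sup>* `` {Some (src e)}"
    define D where "D = ?A\<^sup>* `` {tgt e}"
    have clC: "\<And>a b. a \<in> C \<Longrightarrow> (a, b) \<in> ?A \<Longrightarrow> b \<in> C"
      unfolding C_def by (meson Image_singleton_iff rtrancl.rtrancl_into_rtrancl)
    have clD: "\<And>a b. a \<in> D \<Longrightarrow> (a, b) \<in> ?A \<Longrightarrow> b \<in> D"
      unfolding D_def by (meson Image_singleton_iff rtrancl.rtrancl_into_rtrancl)
    have sC: "Some (src e) \<in> C" and nC: "tgt e \<notin> C" using ac unfolding C_def by auto
    have tD: "tgt e \<in> D" unfolding D_def by auto
    have nD: "Some (src e) \<notin> D" using ac symA unfolding D_def by auto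
    have "None \<notin> C \<or> None \<notin> D"
    proof (rule ccontr)
      assume "\<not> ?thesis"
      then have "(Some (src e), None) \<in> ?A\<^sup>*" "(tgt e, None) \<in> ?A\<^sup>*"
        unfolding C_def D_def by auto
      then show False using ac symA by (meson rtrancl_trans)
    qed
    then show False
    proof
      assume "None \<notin> C"
      from cut_sum[where src=src and tgt=tgt and e=e and x=x, OF this clC] x sC nC xe show False by simp
    next
      assume "None \<notin> D"
      from cut_sum[where src=src and tgt=tgt and e=e and x=x, OF this clD] x tD nD xe show False by simp
    qed
  qed
  then show ?thesis
    by (metis (no_types, lifting) injI matrix_vector_mult_diff_distrib right_minus_eq)
qed

lemma inv_props:
  fixes A :: "real ^ 'n ^ 'm"
  assumes "invertible A"
  shows "A ** matrix_inv A = mat 1 \<and> matrix_inv A ** A = mat 1"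
  using assms unfolding invertible_def matrix_inv_def by (rule someI_ex)

lemma blow_iff:
  fixes src :: "'e::finite \<Rightarrow> 'a::finite"
  shows "blowfish_neighbors src tgt y z \<longleftrightarrow>
    (\<exists>e. y - z = PG src tgt *v axis e 1 \<or> y - z = - (PG src tgt *v axis e 1))"
proof -
  have "((\<exists>v. tgt e = Some v \<and>
              (y - z = axis (src e) 1 - axis v 1 \<or> y - z = -(axis (src e) 1 - axis v 1)))
        \<or> (tgt e = None \<and> (y - z = axis (src e) 1 \<or> y - z = - axis (src e) 1)))
     \<longleftrightarrow> (y - z = vv (Some (src e)) - vv (tgt e) \<or> y - z = - (vv (Some (src e)) - vv (tgt e)))"
    for e by (cases "tgt e") (simp_all add: vv_def)
  then show ?thesis unfolding blowfish_neighbors_def PG_col by simp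
qed

theorem lemma4p8:
  fixes src :: "'e::finite \<Rightarrow> 'a::finite" and tgt :: "'e \<Rightarrow> 'a option"
  assumes "is_tree src tgt"
  shows "invertible (PG src tgt) \<and>
    (\<forall>y z :: real ^ 'a. blowfish_neighbors src tgt y z \<longleftrightarrow>
       unbounded_dp_neighbors (matrix_inv (PG src tgt) *v y) (matrix_inv (PG src tgt) *v z))"
proof -
  let ?P = "PG src tgt"
  let ?M = "matrix_inv (PG src tgt)"
  have inv: "invertible ?P"
    unfolding invertible_eq_bij bij_def
    using inj_PG surj_PG assms unfolding is_tree_def by blast
  have PM: "?P ** ?M = mat 1" and MP: "?M ** ?P = mat 1" using inv_props[OF inv] by auto
  have "blowfish_neighbors src tgt y z \<longleftrightarrow> unbounded_dp_neighbors (?M *v y) (?M *v z)" for y z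
  proof -
    have d: "?M *v y - ?M *v z = ?M *v (y - z)" by (simp add: matrix_vector_mult_diff_distrib)
    have eq: "y - z = ?P *v a \<longleftrightarrow> ?M *v (y - z) = a" for a
    proof
      assume "y - z = ?P *v a"
      then show "?M *v (y - z) = a" by (simp add: matrix_vector_mul_assoc MP)
    next
      assume "?M *v (y - z) = a"
      then have "?P *v (?M *v (y - z)) = ?P *v a" by simp
      then show "y - z = ?P *v a" by (simp add: matrix_vector_mul_assoc PM)
    qed
    have neg: "- (?P *v a) = ?P *v (- a)" for a
      by (simp add: matrix_vector_mult_diff_distrib[where x=0, simplified])
    show ?thesis
      unfolding blow_iff unbounded_dp_neighbors_def d neg eq by simp
  qed
  with inv show ?thesis by blast
qed

end
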